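(* Let $d\ge 2$, $n\ge 36$, $0<\varepsilon\le\frac15$ and $0<\kappa\le\frac16\varepsilon^2$. Let $L_1,\dots,L_n\in\mathrm{GL}_d(\mathbb R)$ satisfy $\mathrm{gr}(L_i)\ge\kappa^{-1}$ for all $i\in[n]$ and $\rho(L_i,L_{i+1})\ge\varepsilon$ for all $i\in[n-1]$. Then $$e^{-11n\kappa/\varepsilon^2}\le\frac{\rho(L_1,L_2,\dots,L_n)}{\rho(L_1,L_2)\cdots\rho(L_{n-1},L_n)}\le e^{11n\kappa/\varepsilon^2}.$$
   Context: $\|\cdot\|$ is the operator norm. For $L\in\mathrm{GL}_d(\mathbb R)$ with singular values $s_1(L)\ge s_2(L)\ge\dots\ge s_d(L)>0$, the gap ratio is $\mathrm{gr}(L)=s_1(L)/s_2(L)$. For $L_1,\dots,L_m\in\mathrm{GL}_d(\mathbb R)$, $\rho(L_1,\dots,L_m)=\frac{\|L_m\cdots L_2L_1\|}{\|L_m\|\cdots\|L_1\|}$. *)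

theory Defs
  imports "HOL-Analysis.Analysis"
begin

definition opnorm :: "real^'d^'d \<Rightarrow> real" where
  "opnorm A = onorm (\<lambda>x. A *v x)"

definition is_singular_values :: "real^'d^'d \<Rightarrow> (nat \<Rightarrow> real) \<Rightarrow> bool" where
  "is_singular_values A s \<longleftrightarrow>
     (\<forall>k. 0 \<le> s k) \<and> (\<forall>j k. j \<le> k \<longrightarrow> s k \<le> s j) \<and> (\<forall>k\<ge>CARD('d). s k = 0) \<and>
     (\<exists>U V (e :: 'd \<Rightarrow> nat). orthogonal_matrix U \<and> orthogonal_matrix V \<and>
        bij_betw e UNIV {0..<CARD('d)} \<and>
        A = U ** (\<chi> i j. if i = j then s (e i) else 0) ** transpose V)"

text \<open>The k-th singular value s_k(A), 1-indexed as in the paper.\<close>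
definition singval :: "real^'d^'d \<Rightarrow> nat \<Rightarrow> real" where
  "singval A k = (THE s. is_singular_values A s) (k - 1)"

definition gap_ratio :: "real^'d^'d \<Rightarrow> real" where
  "gap_ratio A = singval A 1 / singval A 2"

text \<open>mprod L a b = L b ** ... ** L (a+1) ** L a (product of L a, ..., L b, later indices on the left).\<close>
fun mprod :: "(nat \<Rightarrow> real^'d^'d) \<Rightarrow> nat \<Rightarrow> nat \<Rightarrow> real^'d^'d" where
  "mprod L a 0 = (if a = 0 then L 0 else mat 1)"
| "mprod L a (Suc b) = (if a \<le> Suc b then (if a = Suc b then L a else L (Suc b) ** mprod L a b) else mat 1)"

definition rho :: "(nat \<Rightarrow> real^'d^'d) \<Rightarrow> nat \<Rightarrow> nat \<Rightarrow> real" where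
  "rho L a b = opnorm (mprod L a b) / (\<Prod>i=a..b. opnorm (L i))"

end

theory Submission imports Defs "HOL-Computational_Algebra.Polynomial" "HOL-Library.Multiset" begin


lemma nsq: "norm (a + t *\<^sub>R b)^2 = norm a^2 + 2*t*(a \<bullet> b) + t^2*norm b^2"
  for a b :: "'a::real_inner"
  unfolding power2_norm_eq_inner
  by (simp add: inner_add_left inner_add_right inner_commute algebra_simps power2_eq_square)

lemma first_order:
  fixes A :: "real^'d^'d"
  assumes W: "\<And>t. norm (A *v (v + t *\<^sub>R x)) \<le> s * norm (v + t *\<^sub>R x)"
    and nv: "norm v = 1" and Av: "norm (A *v v) = s" and vx: "v \<bullet> x = 0" and s: "0 \<le> s"
  shows "(A *v v) \<bullet> (A *v x) = 0"
proof -
  define c where "c = (A *v v) \<bullet> (A *v x)"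
  define K where "K = s^2 * (norm x)^2"
  have K0: "0 \<le> K" unfolding K_def by simp
  have key: "2 * t * c \<le> t^2 * K" for t
  proof -
    have "norm (A *v (v + t *\<^sub>R x))^2 \<le> (s * norm (v + t *\<^sub>R x))^2"
      using W[of t] by (intro power_mono) auto
    moreover have "norm (A *v (v + t *\<^sub>R x))^2 = s^2 + 2*t*c + t^2 * (norm (A *v x))^2"
      using Av by (simp add: matrix_vector_right_distrib matrix_vector_mult_scaleR nsq c_def)
    moreover have "(s * norm (v + t *\<^sub>R x))^2 = s^2 * (1 + t^2 * (norm x)^2)"
      unfolding power_mult_distrib using nv vx by (simp add: nsq)
    ultimately have "s^2 + 2*t*c + t^2 * (norm (A *v x))^2 \<le> s^2 * (1 + t^2 * (norm x)^2)" by simp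
    moreover have "0 \<le> t^2 * (norm (A *v x))^2" by simp
    moreover have "s^2 * (1 + t^2 * (norm x)^2) = s^2 + t^2*K" by (simp add: K_def algebra_simps)
    ultimately show ?thesis by linarith
  qed
  have "2 * (c/(K+1)) * c * (K+1)^2 \<le> (c/(K+1))^2 * K * (K+1)^2"
    by (rule mult_right_mono[OF key]) simp
  moreover have "2 * (c/(K+1)) * c * (K+1)^2 = 2 * c^2 * (K+1)" using K0
    by (simp add: power2_eq_square field_simps)
  moreover have "(c/(K+1))^2 * K * (K+1)^2 = c^2 * K"
  proof -
    have "K + 1 \<noteq> 0" using K0 by linarith
    thus ?thesis by (simp add: power_divide)
  qed
  ultimately have "2 * c^2 * (K+1) \<le> c^2 * K" by simp
  hence "c^2 * (K + 2) \<le> 0" by (simp add: algebra_simps)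
  moreover have "0 \<le> c^2 * (K + 2)" using K0 by simp
  ultimately have "c^2 * (K + 2) = 0" by linarith
  hence "c^2 \<le> 0" using K0 by simp
  thus ?thesis unfolding c_def by simp
qed



lemma exists_unit_orth:
  fixes f :: "nat \<Rightarrow> real^'d"
  assumes "k < CARD('d)"
  shows "\<exists>x. norm x = 1 \<and> (\<forall>l<k. f l \<bullet> x = 0)"
proof -
  have "dim (f ` {..<k}) \<le> card (f ` {..<k})" by (rule dim_le_card') simp
  also have "\<dots> \<le> k" using card_image_le[of "{..<k}" f] by simp
  finally have "dim (f ` {..<k}) < DIM(real^'d)" using assms by simp
  then obtain x where x: "x \<noteq> 0" "\<And>y. y \<in> span (f ` {..<k}) \<Longrightarrow> orthogonal x y"
    using orthogonal_to_subspace_exists[of "f ` {..<k}"] by blast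
  have "f l \<bullet> (x /\<^sub>R norm x) = 0" if "l < k" for l
  proof -
    have "orthogonal x (f l)" using x(2) that by (simp add: span_base)
    thus ?thesis by (simp add: orthogonal_def inner_commute)
  qed
  moreover have "norm (x /\<^sub>R norm x) = 1" using x(1) by simp
  ultimately show ?thesis by blast
qed

definition svd_inv :: "real^'d^'d \<Rightarrow> nat \<Rightarrow> (nat \<Rightarrow> real^'d) \<Rightarrow> (nat \<Rightarrow> real^'d) \<Rightarrow> (nat \<Rightarrow> real) \<Rightarrow> bool" where
"svd_inv A k v u \<sigma> \<longleftrightarrow>
 (\<forall>i<k. norm (v i) = 1 \<and> norm (u i) = 1 \<and> A *v v i = \<sigma> i *\<^sub>R u i \<and> 0 \<le> \<sigma> i) \<and>
 (\<forall>i<k. \<forall>j<k. i \<noteq> j \<longrightarrow> v i \<bullet> v j = 0 \<and> u i \<bullet> u j = 0) \<and>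
 (\<forall>i j. i \<le> j \<longrightarrow> j < k \<longrightarrow> \<sigma> j \<le> \<sigma> i) \<and>
 (\<forall>j<k. \<forall>x. (\<forall>l<j. v l \<bullet> x = 0) \<longrightarrow> norm (A *v x) \<le> \<sigma> j * norm x) \<and>
 (\<forall>j<k. \<forall>x. (\<forall>l\<le>j. v l \<bullet> x = 0) \<longrightarrow> u j \<bullet> (A *v x) = 0)"

lemma svd_step:
  fixes A :: "real^'d^'d"
  assumes inv: "svd_inv A k v u \<sigma>" and k: "k < CARD('d)"
  shows "\<exists>v' u' \<sigma>'. svd_inv A (Suc k) v' u' \<sigma>'"
proof -
  define W where "W = {x::real^'d. \<forall>l<k. v l \<bullet> x = 0}"
  have W_eq: "W = (\<Inter>l\<in>{..<k}. {x. v l \<bullet> x = 0})" unfolding W_def by auto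
  have "closed W" unfolding W_eq by (intro closed_INT ballI closed_hyperplane)
  hence cS: "compact (sphere 0 1 \<inter> W)" by (intro compact_Int_closed) auto
  obtain x0 where x0: "norm x0 = 1" "\<forall>l<k. v l \<bullet> x0 = 0" using exists_unit_orth[OF k] by blast
  hence neS: "sphere 0 1 \<inter> W \<noteq> {}" unfolding W_def by auto
  have cont: "continuous_on (sphere 0 1 \<inter> W) (\<lambda>x. norm (A *v x))"
    by (intro continuous_on_norm linear_continuous_on matrix_vector_mul_bounded_linear)
  obtain vk where vk: "vk \<in> sphere 0 1 \<inter> W" "\<And>y. y \<in> sphere 0 1 \<inter> W \<Longrightarrow> norm (A *v y) \<le> norm (A *v vk)"
    using continuous_attains_sup[OF cS neS cont] by blast
  define sk where "sk = norm (A *v vk)"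
  have nvk: "norm vk = 1" and vkW: "\<forall>l<k. v l \<bullet> vk = 0" using vk(1) unfolding W_def by auto
  have sk0: "0 \<le> sk" unfolding sk_def by simp
  have maxW: "norm (A *v x) \<le> sk * norm x" if "\<forall>l<k. v l \<bullet> x = 0" for x
  proof (cases "x = 0")
    case True thus ?thesis by simp
  next
    case False
    have "x /\<^sub>R norm x \<in> sphere 0 1 \<inter> W" using False that unfolding W_def by auto
    hence "norm (A *v (x /\<^sub>R norm x)) \<le> sk" using vk(2) unfolding sk_def by blast
    hence "norm (A *v x) / norm x \<le> sk" by (simp add: matrix_vector_mult_scaleR divide_inverse mult.commute)
    thus ?thesis using False by (simp add: divide_le_eq mult.commute)
  qed
  have fo: "(A *v vk) \<bullet> (A *v x) = 0" if "\<forall>l<k. v l \<bullet> x = 0" "vk \<bullet> x = 0" for x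
  proof (rule first_order[OF _ nvk _ that(2) sk0])
    show "norm (A *v (vk + t *\<^sub>R x)) \<le> sk * norm (vk + t *\<^sub>R x)" for t
      using that(1) vkW by (intro maxW) (simp add: inner_add_right)
  qed (simp add: sk_def)
  obtain uk where uk: "norm uk = 1" "A *v vk = sk *\<^sub>R uk" "\<forall>l<k. u l \<bullet> uk = 0"
    "\<And>x. \<forall>l<k. v l \<bullet> x = 0 \<Longrightarrow> vk \<bullet> x = 0 \<Longrightarrow> uk \<bullet> (A *v x) = 0"
  proof (cases "sk > 0")
    case True
    define uk where "uk = (1/sk) *\<^sub>R (A *v vk)"
    show ?thesis
    proof (rule that[of uk])
      show "norm uk = 1" using True unfolding uk_def sk_def by simp
      show "A *v vk = sk *\<^sub>R uk" using True unfolding uk_def by simp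
      show "\<forall>l<k. u l \<bullet> uk = 0"
      proof (intro allI impI)
        fix l assume "l < k"
        have "u l \<bullet> (A *v vk) = 0" using inv \<open>l < k\<close> vkW unfolding svd_inv_def by auto
        thus "u l \<bullet> uk = 0" unfolding uk_def by simp
      qed
      show "uk \<bullet> (A *v x) = 0" if "\<forall>l<k. v l \<bullet> x = 0" "vk \<bullet> x = 0" for x
        using fo[OF that] unfolding uk_def by simp
    qed
  next
    case False
    hence sk00: "sk = 0" using sk0 by simp
    obtain uk where "norm uk = 1" "\<forall>l<k. u l \<bullet> uk = 0" using exists_unit_orth[OF k] by blast
    moreover have "A *v vk = sk *\<^sub>R uk" using sk00 unfolding sk_def by simp
    moreover have "uk \<bullet> (A *v x) = 0" if "\<forall>l<k. v l \<bullet> x = 0" for x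
      using maxW[OF that] sk00 by simp
    ultimately show ?thesis using that by blast
  qed
  have sk_le: "sk \<le> \<sigma> i" if "i < k" for i
  proof -
    have "norm (A *v vk) \<le> \<sigma> i * norm vk" using inv that vkW unfolding svd_inv_def by auto
    thus ?thesis using nvk unfolding sk_def by simp
  qed
  let ?v = "v(k:=vk)" and ?u = "u(k:=uk)" and ?s = "\<sigma>(k:=sk)"
  have P1: "\<forall>i<Suc k. norm (?v i) = 1 \<and> norm (?u i) = 1 \<and> A *v ?v i = ?s i *\<^sub>R ?u i \<and> 0 \<le> ?s i"
  proof (intro allI impI)
    fix i assume "i < Suc k"
    thus "norm (?v i) = 1 \<and> norm (?u i) = 1 \<and> A *v ?v i = ?s i *\<^sub>R ?u i \<and> 0 \<le> ?s i"
      using inv nvk uk sk0 unfolding svd_inv_def by (cases "i = k") auto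
  qed
  have P2: "\<forall>i<Suc k. \<forall>j<Suc k. i \<noteq> j \<longrightarrow> ?v i \<bullet> ?v j = 0 \<and> ?u i \<bullet> ?u j = 0"
  proof (intro allI impI)
    fix i j assume "i < Suc k" "j < Suc k" "i \<noteq> j"
    thus "?v i \<bullet> ?v j = 0 \<and> ?u i \<bullet> ?u j = 0"
      using inv vkW uk(3) unfolding svd_inv_def
      by (cases "i = k"; cases "j = k") (auto simp: inner_commute)
  qed
  have P3: "\<forall>i j. i \<le> j \<longrightarrow> j < Suc k \<longrightarrow> ?s j \<le> ?s i"
  proof (intro allI impI)
    fix i j assume "i \<le> j" "j < Suc k"
    thus "?s j \<le> ?s i"
      using inv sk_le unfolding svd_inv_def by (cases "i = k"; cases "j = k") auto
  qed
  have P4: "\<forall>j<Suc k. \<forall>x. (\<forall>l<j. ?v l \<bullet> x = 0) \<longrightarrow> norm (A *v x) \<le> ?s j * norm x"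
  proof (intro allI impI)
    fix j x assume "j < Suc k" "\<forall>l<j. ?v l \<bullet> x = 0"
    thus "norm (A *v x) \<le> ?s j * norm x"
      using inv maxW unfolding svd_inv_def by (cases "j = k") auto
  qed
  have P5: "\<forall>j<Suc k. \<forall>x. (\<forall>l\<le>j. ?v l \<bullet> x = 0) \<longrightarrow> ?u j \<bullet> (A *v x) = 0"
  proof (intro allI impI)
    fix j x assume "j < Suc k" "\<forall>l\<le>j. ?v l \<bullet> x = 0"
    show "?u j \<bullet> (A *v x) = 0"
    proof (cases "j = k")
      case True
      have "\<forall>l<k. v l \<bullet> x = 0"
      proof (intro allI impI)
        fix l assume "l < k"
        hence "l \<le> j" using True by simp
        hence "?v l \<bullet> x = 0" using \<open>\<forall>l\<le>j. ?v l \<bullet> x = 0\<close> by blast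
        moreover have "?v l = v l" using \<open>l < k\<close> by simp
        ultimately show "v l \<bullet> x = 0" by simp
      qed
      moreover have "vk \<bullet> x = 0" using \<open>\<forall>l\<le>j. ?v l \<bullet> x = 0\<close> True by auto
      ultimately show ?thesis using uk(4)[of x] True by simp
    next
      case False
      hence jk: "j < k" using \<open>j < Suc k\<close> by simp
      have "\<forall>l\<le>j. v l \<bullet> x = 0"
      proof (intro allI impI)
        fix l assume "l \<le> j"
        hence "?v l \<bullet> x = 0" using \<open>\<forall>l\<le>j. ?v l \<bullet> x = 0\<close> by simp
        thus "v l \<bullet> x = 0" using \<open>l \<le> j\<close> jk by simp
      qed
      hence "u j \<bullet> (A *v x) = 0" using inv jk unfolding svd_inv_def by blast
      thus ?thesis using False by simp
    qed
  qed
  have "svd_inv A (Suc k) ?v ?u ?s" unfolding svd_inv_def using P1 P2 P3 P4 P5 by blast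
  thus ?thesis by blast
qed



lemma svd_inv_exists:
  fixes A :: "real^'d^'d"
  shows "k \<le> CARD('d) \<Longrightarrow> \<exists>v u \<sigma>. svd_inv A k v u \<sigma>"
proof (induction k)
  case 0
  show ?case unfolding svd_inv_def by auto
next
  case (Suc k)
  then obtain v u \<sigma> where "svd_inv A k v u \<sigma>" by auto
  thus ?case using svd_step[of A k v u \<sigma>] Suc.prems by auto
qed

lemma svd_full:
  fixes A :: "real^'d^'d"
  shows "\<exists>v u \<sigma>. svd_inv A CARD('d) v u \<sigma> \<and> is_singular_values A (\<lambda>k. if k < CARD('d) then \<sigma> k else 0)"
proof -
  obtain v u \<sigma> where inv: "svd_inv A CARD('d) v u \<sigma>" using svd_inv_exists[of "CARD('d)" A] by auto
  define s where "s = (\<lambda>k. if k < CARD('d) then \<sigma> k else 0)"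
  obtain e :: "'d \<Rightarrow> nat" where e: "bij_betw e UNIV {0..<CARD('d)}"
    using ex_bij_betw_finite_nat[of "UNIV :: 'd set"] by auto
  have eless: "e c < CARD('d)" for c using e by (auto simp: bij_betw_def)
  have einj: "e c = e c' \<Longrightarrow> c = c'" for c c' using e by (auto simp: bij_betw_def inj_on_def)
  define U :: "real^'d^'d" where "U = (\<chi> r c. u (e c) $ r)"
  define V :: "real^'d^'d" where "V = (\<chi> r c. v (e c) $ r)"
  define D :: "real^'d^'d" where "D = (\<chi> i j. if i = j then s (e i) else 0)"
  have colU: "column c U = u (e c)" for c unfolding U_def column_def by (simp add: vec_eq_iff)
  have colV: "column c V = v (e c)" for c unfolding V_def column_def by (simp add: vec_eq_iff)
  have inv1: "\<And>i. i < CARD('d) \<Longrightarrow> norm (v i) = 1 \<and> norm (u i) = 1"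
    using inv[unfolded svd_inv_def, THEN conjunct1] by simp
  have inv2: "\<And>i j. i < CARD('d) \<Longrightarrow> j < CARD('d) \<Longrightarrow> i \<noteq> j \<Longrightarrow> v i \<bullet> v j = 0 \<and> u i \<bullet> u j = 0"
    using inv[unfolded svd_inv_def, THEN conjunct2, THEN conjunct1] by simp
  have oU: "orthogonal_matrix U" unfolding orthogonal_matrix_orthonormal_columns colU orthogonal_def
  proof (intro conjI allI impI)
    fix i show "norm (u (e i)) = 1" using inv1[OF eless[of i]] by simp
  next
    fix i j :: 'd assume "i \<noteq> j"
    hence "e i \<noteq> e j" using einj by blast
    thus "u (e i) \<bullet> u (e j) = 0" using inv2[OF eless eless] by blast
  qed
  have oV: "orthogonal_matrix V" unfolding orthogonal_matrix_orthonormal_columns colV orthogonal_def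
  proof (intro conjI allI impI)
    fix i show "norm (v (e i)) = 1" using inv1[OF eless[of i]] by simp
  next
    fix i j :: 'd assume "i \<noteq> j"
    hence "e i \<noteq> e j" using einj by blast
    thus "v (e i) \<bullet> v (e j) = 0" using inv2[OF eless eless] by blast
  qed
  have I1: "\<forall>i<CARD('d). norm (v i) = 1 \<and> norm (u i) = 1 \<and> A *v v i = \<sigma> i *\<^sub>R u i \<and> 0 \<le> \<sigma> i"
    using inv[unfolded svd_inv_def] by (rule conjunct1)
  have Av: "A *v v (e c) = \<sigma> (e c) *\<^sub>R u (e c)" for c using I1 eless[of c] by simp
  have AV: "A ** V = U ** D"
  proof -
    have "(A ** V) $ r $ c = (U ** D) $ r $ c" for r c
    proof -
      have "(A ** V) $ r $ c = (A *v v (e c)) $ r"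
        unfolding matrix_matrix_mult_def matrix_vector_mult_def V_def by simp
      also have "\<dots> = \<sigma> (e c) * u (e c) $ r" using Av by simp
      also have "\<dots> = (U ** D) $ r $ c"
        unfolding matrix_matrix_mult_def U_def D_def s_def using eless
        by (simp add: if_distrib[of "\<lambda>x. _ * x"] sum.delta' cong: if_cong)
      finally show ?thesis .
    qed
    thus ?thesis by (simp add: vec_eq_iff)
  qed
  have "A = U ** D ** transpose V"
  proof -
    have "A = A ** (V ** transpose V)" using oV unfolding orthogonal_matrix_def by simp
    also have "\<dots> = U ** D ** transpose V" by (simp add: matrix_mul_assoc AV)
    finally show ?thesis .
  qed
  note Aeq = this
  have I3: "\<forall>i j. i \<le> j \<longrightarrow> j < CARD('d) \<longrightarrow> \<sigma> j \<le> \<sigma> i"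
    using inv[unfolded svd_inv_def, THEN conjunct2, THEN conjunct2, THEN conjunct1] .
  have "is_singular_values A s" unfolding is_singular_values_def
  proof (intro conjI allI impI)
    fix k show "0 \<le> s k" using I1 by (simp add: s_def)
  next
    fix j k :: nat assume jk: "j \<le> k"
    show "s k \<le> s j"
    proof (cases "k < CARD('d)")
      case True thus ?thesis using I3 jk by (simp add: s_def)
    next
      case False thus ?thesis using I1 by (simp add: s_def)
    qed
  next
    fix k :: nat assume "CARD('d) \<le> k" thus "s k = 0" by (simp add: s_def)
  next
    show "\<exists>U V (e :: 'd \<Rightarrow> nat). orthogonal_matrix U \<and> orthogonal_matrix V \<and>
        bij_betw e UNIV {0..<CARD('d)} \<and> A = U ** (\<chi> i j. if i = j then s (e i) else 0) ** transpose V"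
      using oU oV e Aeq unfolding D_def by blast
  qed
  thus ?thesis using inv unfolding s_def by (intro exI[of _ v] exI[of _ u] exI[of _ \<sigma>]) simp
qed



lemma matrix_diff_ldistrib: "(A::real^'n^'m) ** (B - C) = A ** B - A ** C"
  by (vector matrix_matrix_mult_def sum_subtractf[symmetric] field_simps)
lemma matrix_diff_rdistrib: "((B::real^'n^'m) - C) ** A = B ** A - C ** A"
  by (vector matrix_matrix_mult_def sum_subtractf[symmetric] field_simps)

lemma charpoly_sv:
  fixes A :: "real^'d^'d"
  assumes "is_singular_values A s"
  shows "det (mat x - transpose A ** A) = (\<Prod>k<CARD('d). x - (s k)^2)"
proof -
  obtain U V and e :: "'d \<Rightarrow> nat" where oU: "orthogonal_matrix U" and oV: "orthogonal_matrix V"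
    and e: "bij_betw e UNIV {0..<CARD('d)}"
    and A: "A = U ** (\<chi> i j. if i = j then s (e i) else 0) ** transpose V"
    using assms unfolding is_singular_values_def by blast
  define D :: "real^'d^'d" where "D = (\<chi> i j. if i = j then s (e i) else 0)"
  have tD: "transpose D = D" unfolding D_def transpose_def by (simp add: vec_eq_iff)
  have DD: "(D ** D) $ i $ j = (if i = j then (s (e i))^2 else 0)" for i j
    unfolding D_def matrix_matrix_mult_def
    by (auto simp: if_distrib[of "\<lambda>x. x * _"] power2_eq_square sum.delta' cong: if_cong)
  have tUU: "transpose U ** U = mat 1" using oU unfolding orthogonal_matrix_def by simp
  have VVt: "V ** transpose V = mat 1" using oV unfolding orthogonal_matrix_def by simp
  have tAA: "transpose A ** A = V ** (D ** D) ** transpose V"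
  proof -
    have "transpose A = V ** D ** transpose U"
      unfolding A D_def[symmetric] by (simp add: matrix_transpose_mul tD matrix_mul_assoc)
    hence "transpose A ** A = V ** D ** (transpose U ** U) ** D ** transpose V"
      unfolding A D_def[symmetric] by (simp add: matrix_mul_assoc)
    thus ?thesis by (simp add: tUU matrix_mul_assoc)
  qed
  have mx: "mat x = V ** mat x ** transpose V"
  proof -
    have m: "mat x = x *\<^sub>R (mat 1 :: real^'d^'d)" by (simp add: vec_eq_iff mat_def)
    have "V ** mat x ** transpose V = V ** (x *\<^sub>R mat 1) ** transpose V" using m by simp
    also have "\<dots> = (x *\<^sub>R V) ** transpose V" by (simp add: matrix_scalar_ac)
    also have "\<dots> = x *\<^sub>R (V ** transpose V)" by (simp add: scalar_matrix_assoc)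
    also have "\<dots> = mat x" using VVt m by simp
    finally show ?thesis by simp
  qed
  have eq: "mat x - transpose A ** A = V ** (mat x - D ** D) ** transpose V"
    by (subst mx, simp add: tAA matrix_diff_ldistrib matrix_diff_rdistrib)
  have dV: "det V * det (transpose V) = 1" using VVt det_mul[of V "transpose V"] by simp
  have "det (mat x - transpose A ** A) = det (mat x - D ** D) * (det V * det (transpose V))"
    unfolding eq det_mul by simp
  also have "\<dots> = det (mat x - D ** D)" using dV by simp
  also have "\<dots> = (\<Prod>i\<in>UNIV. x - (s (e i))^2)"
    by (subst det_diagonal) (auto simp: DD mat_def)
  also have "\<dots> = (\<Prod>k\<in>{0..<CARD('d)}. x - (s k)^2)"
    by (rule prod.reindex_bij_betw[OF e, of "\<lambda>k. x - (s k)^2"])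
  finally show ?thesis by (simp add: atLeast0LessThan)
qed



lemma order_linear_factor: "order c [:-a, 1:] = (if c = a then 1 else (0::nat))"
proof (cases "c = a")
  case True thus ?thesis using order_power_n_n[of a 1] by simp
next
  case False thus ?thesis by (simp add: order_0I)
qed

lemma order_prod_linear:
  fixes a :: "nat \<Rightarrow> real" and n :: nat
  shows "order c (\<Prod>k<n. [:-a k, 1:]) = card {k. k < n \<and> a k = (c::real)}"
proof (induction n)
  case 0 thus ?case by simp
next
  case (Suc n)
  have ne: "(\<Prod>k<n. [:-a k, 1:]) \<noteq> 0" by (simp add: prod_zero_iff)
  have "order c (\<Prod>k<Suc n. [:-a k, 1:]) = order c ((\<Prod>k<n. [:-a k, 1:]) * [:-a n, 1:])"
    by (simp add: mult.commute)
  also have "\<dots> = card {k. k < n \<and> a k = c} + (if c = a n then 1 else 0)"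
  proof -
    have ne2: "(\<Prod>k<n. [:-a k, 1:]) * [:-a n, 1:] \<noteq> 0"
      using ne by (metis mult_eq_0_iff pCons_eq_0_iff one_neq_zero)
    show ?thesis by (simp only: order_mult[OF ne2] order_linear_factor Suc.IH)
  qed
  also have "\<dots> = card {k. k < Suc n \<and> a k = c}"
  proof (cases "a n = c")
    case True
    have "{k. k < Suc n \<and> a k = c} = insert n {k. k < n \<and> a k = c}" using True by auto
    thus ?thesis using True by simp
  next
    case False
    have "{k. k < Suc n \<and> a k = c} = {k. k < n \<and> a k = c}" using False less_Suc_eq by auto
    thus ?thesis using False by auto
  qed
  finally show ?case .
qed

lemma prod_linear_eq_card:
  fixes a b :: "nat \<Rightarrow> real"
  assumes "\<And>x. (\<Prod>k<n. x - a k) = (\<Prod>k<n. x - b k)"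
  shows "card {k. k < n \<and> a k = c} = card {k. k < n \<and> b k = c}"
proof -
  have "poly (\<Prod>k<n. [:-a k, 1:]) = poly (\<Prod>k<n. [:-b k, 1:])"
    using assms by (simp add: fun_eq_iff poly_prod)
  hence "(\<Prod>k<n. [:-a k, 1:]) = (\<Prod>k<n. [:-b k, 1:])" by (simp add: poly_eq_poly_eq_iff)
  thus ?thesis using order_prod_linear[where c=c and n=n and a=a] order_prod_linear[where c=c and n=n and a=b] by simp
qed

lemma sorted_desc_eq:
  fixes s t :: "nat \<Rightarrow> real"
  assumes cnt: "\<And>c. card {k. k < n \<and> s k = c} = card {k. k < n \<and> t k = c}"
    and ds: "\<And>j k. j \<le> k \<Longrightarrow> s k \<le> s j" and dt: "\<And>j k. j \<le> k \<Longrightarrow> t k \<le> t j"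
    and k: "k < n"
  shows "s k = t k"
proof -
  define xs where "xs = map (\<lambda>k. - s k) [0..<n]"
  define ys where "ys = map (\<lambda>k. - t k) [0..<n]"
  have "count (mset xs) c = count (mset ys) c" for c
  proof -
    have "count (mset xs) c = card {k. k < n \<and> s k = - c}"
      unfolding xs_def count_mset count_list_eq_length_filter length_filter_conv_card by (rule arg_cong[where f=card]) auto
    moreover have "count (mset ys) c = card {k. k < n \<and> t k = - c}"
      unfolding ys_def count_mset count_list_eq_length_filter length_filter_conv_card by (rule arg_cong[where f=card]) auto
    ultimately show ?thesis using cnt by simp
  qed
  hence m: "mset ys = mset xs" by (simp add: multiset_eq_iff)
  have sx: "sorted xs" unfolding xs_def sorted_iff_nth_mono using ds by simp
  have sy: "sorted ys" unfolding ys_def sorted_iff_nth_mono using dt by simp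
  have "xs = ys" using properties_for_sort[OF m sy] sorted_sort_id[OF sx] by simp
  hence "xs ! k = ys ! k" by simp
  thus ?thesis using k unfolding xs_def ys_def by simp
qed

lemma sv_unique:
  fixes A :: "real^'d^'d"
  assumes s: "is_singular_values A s" and t: "is_singular_values A t"
  shows "s = t"
proof
  fix k
  have eq: "(\<Prod>k<CARD('d). x - (s k)^2) = (\<Prod>k<CARD('d). x - (t k)^2)" for x
    using charpoly_sv[OF s, of x] charpoly_sv[OF t, of x] by simp
  have s0: "0 \<le> s k" "0 \<le> t k" for k using s t unfolding is_singular_values_def by auto
  have cnt: "card {k. k < CARD('d) \<and> s k = c} = card {k. k < CARD('d) \<and> t k = c}" for c
  proof (cases "c \<ge> 0")
    case True
    have "{k. k < CARD('d) \<and> s k = c} = {k. k < CARD('d) \<and> (s k)^2 = c^2}"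
      using s0 True by (auto simp: power2_eq_iff_nonneg)
    moreover have "{k. k < CARD('d) \<and> t k = c} = {k. k < CARD('d) \<and> (t k)^2 = c^2}"
      using s0 True by (auto simp: power2_eq_iff_nonneg)
    ultimately show ?thesis using prod_linear_eq_card[OF eq] by simp
  next
    case False
    have e1: "{k. k < CARD('d) \<and> s k = c} = {}" using s0 False by force
    have e2: "{k. k < CARD('d) \<and> t k = c} = {}" using s0 False by force
    show ?thesis unfolding e1 e2 ..
  qed
  show "s k = t k"
  proof (cases "k < CARD('d)")
    case True
    show ?thesis by (rule sorted_desc_eq[OF cnt _ _ True]) (use s t in \<open>auto simp: is_singular_values_def\<close>)
  next
    case False thus ?thesis using s t unfolding is_singular_values_def by auto
  qed
qed



definition good :: "real^'d^'d \<Rightarrow> real^'d \<Rightarrow> real^'d \<Rightarrow> real \<Rightarrow> bool" where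
  "good B u v \<kappa> \<longleftrightarrow> norm u = 1 \<and> norm v = 1 \<and> B *v v = u \<and>
     (\<forall>x. v \<bullet> x = 0 \<longrightarrow> norm (B *v x) \<le> \<kappa> * norm x \<and> u \<bullet> (B *v x) = 0)"

lemma decomp:
  assumes g: "good B u v \<kappa>" and k0: "0 \<le> \<kappa>"
  shows "u \<bullet> (B *v y) = v \<bullet> y" "norm (B *v y - (v \<bullet> y) *\<^sub>R u) \<le> \<kappa> * norm y"
proof -
  define z where "z = y - (v \<bullet> y) *\<^sub>R v"
  have nv: "v \<bullet> v = 1" using g unfolding good_def by (simp add: norm_eq_1)
  have nu: "u \<bullet> u = 1" using g unfolding good_def by (simp add: norm_eq_1)
  have vz: "v \<bullet> z = 0" unfolding z_def using nv by (simp add: inner_diff_right)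
  have By: "B *v y = B *v z + (v \<bullet> y) *\<^sub>R u"
    using g unfolding z_def good_def by (simp add: matrix_vector_mult_diff_distrib matrix_vector_mult_scaleR)
  have oz: "norm (B *v z) \<le> \<kappa> * norm z" "u \<bullet> (B *v z) = 0" using g vz unfolding good_def by auto
  show "u \<bullet> (B *v y) = v \<bullet> y" unfolding By using oz nu by (simp add: inner_add_right)
  have "norm z ^ 2 = norm y ^ 2 - (v \<bullet> y)^2"
    unfolding z_def power2_norm_eq_inner using nv
    by (simp add: inner_diff_left inner_diff_right inner_commute power2_eq_square)
  hence "norm z ^ 2 \<le> norm y ^ 2" by simp
  hence "norm z \<le> norm y" by (rule power2_le_imp_le) simp
  hence "\<kappa> * norm z \<le> \<kappa> * norm y" using k0 by (rule mult_left_mono)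
  thus "norm (B *v y - (v \<bullet> y) *\<^sub>R u) \<le> \<kappa> * norm y" using By oz by simp
qed

lemma good_norm:
  assumes g: "good B u v \<kappa>" and k0: "0 \<le> \<kappa>" "\<kappa> \<le> 1"
  shows "norm (B *v y) \<le> norm y"
proof -
  define z where "z = y - (v \<bullet> y) *\<^sub>R v"
  have nv: "v \<bullet> v = 1" using g unfolding good_def by (simp add: norm_eq_1)
  have nu: "u \<bullet> u = 1" using g unfolding good_def by (simp add: norm_eq_1)
  have vz: "v \<bullet> z = 0" unfolding z_def using nv by (simp add: inner_diff_right)
  have By: "B *v y = B *v z + (v \<bullet> y) *\<^sub>R u"
    using g unfolding z_def good_def by (simp add: matrix_vector_mult_diff_distrib matrix_vector_mult_scaleR)
  have oz: "norm (B *v z) \<le> \<kappa> * norm z" "u \<bullet> (B *v z) = 0" using g vz unfolding good_def by auto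
  have nz: "norm z ^ 2 = norm y ^ 2 - (v \<bullet> y)^2"
    unfolding z_def power2_norm_eq_inner using nv
    by (simp add: inner_diff_left inner_diff_right inner_commute power2_eq_square)
  have "norm (B *v z) \<le> norm z" using oz(1) k0 
    by (meson mult_left_le_one_le norm_ge_zero order_trans)
  hence "norm (B *v z)^2 \<le> norm z ^ 2" by (simp add: power_mono)
  have "norm (B *v y)^2 = norm (B *v z)^2 + (v \<bullet> y)^2"
    unfolding By power2_norm_eq_inner using oz(2) nu
    by (simp add: inner_add_left inner_add_right inner_commute power2_eq_square)
  also have "\<dots> \<le> norm y ^ 2" using \<open>norm (B *v z)^2 \<le> norm z ^ 2\<close> nz by simp
  finally have "norm (B *v y)^2 \<le> norm y ^ 2" .
  thus ?thesis by (rule power2_le_imp_le) simp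
qed



lemma mprod_Suc_vec: "mprod B 1 (Suc k) *v y = B (Suc k) *v (mprod B 1 k *v y)"
proof (cases k)
  case 0 thus ?thesis by simp
next
  case (Suc j) thus ?thesis by (simp add: matrix_vector_mul_assoc)
qed

lemma scalar_facts:
  fixes \<kappa> \<epsilon> a :: real
  assumes "0 < \<kappa>" "0 < \<epsilon>" "\<epsilon> \<le> 1/5" "\<kappa> \<le> \<epsilon>^2/6" "9/10*\<epsilon> \<le> a"
  shows "\<kappa> * (1 + 3*\<kappa>/\<epsilon>) \<le> (3*\<kappa>/\<epsilon>) * (a - 3*\<kappa>/\<epsilon>)"
    "\<kappa> * (1 + 3*\<kappa>/\<epsilon>) \<le> (3*\<kappa>/\<epsilon>) * (a + 3*\<kappa>/\<epsilon>)"
    "0 \<le> a - 3*\<kappa>/\<epsilon>" "\<kappa> \<le> 3*\<kappa>/\<epsilon>" "3*\<kappa>/\<epsilon> \<le> 1/10"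
proof -
  define q where "q = 3*\<kappa>/\<epsilon>"
  have q\<epsilon>: "q * \<epsilon> = 3*\<kappa>" unfolding q_def using assms by simp
  have "\<kappa> \<le> \<epsilon> * (\<epsilon>/6)" using assms by (simp add: power2_eq_square)
  hence qle: "q \<le> \<epsilon>/2" unfolding q_def using assms by (simp add: divide_le_eq field_simps)
  have q0: "0 \<le> q" unfolding q_def using assms by simp
  have q1: "q \<le> 1/10" using qle assms by simp
  have "a - q \<ge> 4/10*\<epsilon>" using qle assms by simp
  hence "q * (a - q) \<ge> q * (4/10*\<epsilon>)" using q0 by (rule mult_left_mono)
  moreover have "q * (4/10*\<epsilon>) = 12/10*\<kappa>" using q\<epsilon> by simp
  moreover have "\<kappa> * (1 + q) \<le> \<kappa> * (11/10)" using q1 assms by simp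
  ultimately have h: "\<kappa> * (1 + q) \<le> q * (a - q)" using assms(1) by linarith
  thus "\<kappa> * (1 + 3*\<kappa>/\<epsilon>) \<le> (3*\<kappa>/\<epsilon>) * (a - 3*\<kappa>/\<epsilon>)" unfolding q_def .
  have "q * (a + q) \<ge> q * (a - q)" using q0 by (intro mult_left_mono) auto
  hence "\<kappa> * (1 + q) \<le> q * (a + q)" using h by linarith
  thus "\<kappa> * (1 + 3*\<kappa>/\<epsilon>) \<le> (3*\<kappa>/\<epsilon>) * (a + 3*\<kappa>/\<epsilon>)" unfolding q_def .
  show "0 \<le> a - 3*\<kappa>/\<epsilon>" using \<open>a - q \<ge> 4/10*\<epsilon>\<close> assms unfolding q_def by simp
  have "\<kappa> * \<epsilon> \<le> 3 * \<kappa>" using assms by simp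
  thus "\<kappa> \<le> 3*\<kappa>/\<epsilon>" using assms by (simp add: le_divide_eq)
  show "3*\<kappa>/\<epsilon> \<le> 1/10" using q1 unfolding q_def .
qed



lemma chain:
  fixes B :: "nat \<Rightarrow> real^'d^'d" and u v :: "nat \<Rightarrow> real^'d"
  assumes good: "\<forall>i\<in>{1..n}. good (B i) (u i) (v i) \<kappa>"
    and k0: "0 < \<kappa>" and e0: "0 < \<epsilon>" and e1: "\<epsilon> \<le> 1/5" and ke: "\<kappa> \<le> \<epsilon>^2/6"
    and alow: "\<forall>i\<in>{1..<n}. 9/10*\<epsilon> \<le> \<bar>v (Suc i) \<bullet> u i\<bar>"
    and n1: "1 \<le> n"
  shows "norm (mprod B 1 n *v x) \<le> (1 + 3*\<kappa>/\<epsilon>) * (\<Prod>i\<in>{1..<n}. \<bar>v (Suc i) \<bullet> u i\<bar> + 3*\<kappa>/\<epsilon>) * norm x"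
    and "(\<Prod>i\<in>{1..<n}. \<bar>v (Suc i) \<bullet> u i\<bar> - 3*\<kappa>/\<epsilon>) \<le> norm (mprod B 1 n *v v 1)"
proof -
  define q where "q = 3*\<kappa>/\<epsilon>"
  define a where "a i = \<bar>v (Suc i) \<bullet> u i\<bar>" for i
  define P where "P k y = mprod B 1 k *v y" for k y
  define c where "c k y = u k \<bullet> P k y" for k y
  define w where "w k y = P k y - c k y *\<^sub>R u k" for k y
  have sf: "\<kappa> * (1 + q) \<le> q * (a i - q)" "\<kappa> * (1 + q) \<le> q * (a i + q)" "0 \<le> a i - q"
    if "i \<in> {1..<n}" for i
    using scalar_facts[OF k0 e0 e1 ke, of "a i"] alow that unfolding q_def a_def by auto
  have kq: "\<kappa> \<le> q" "q \<le> 1/10" using scalar_facts[OF k0 e0 e1 ke, of "9/10*\<epsilon>"] unfolding q_def by auto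
  have q0: "0 \<le> q" using kq k0 by simp
  have Pdec: "P k y = c k y *\<^sub>R u k + w k y" for k y unfolding w_def by simp
  have nu: "norm (u k) = 1" "norm (v k) = 1" if "k \<in> {1..n}" for k using good that unfolding good_def by auto
  have nyle: "norm (P k y) \<le> \<bar>c k y\<bar> + norm (w k y)" if "k \<in> {1..n}" for k y
    unfolding Pdec using norm_triangle_ineq[of "c k y *\<^sub>R u k" "w k y"] nu[OF that] by simp
  have step: "\<bar>c (Suc k) y - (v (Suc k) \<bullet> u k) * c k y\<bar> \<le> norm (w k y)
      \<and> norm (w (Suc k) y) \<le> \<kappa> * (\<bar>c k y\<bar> + norm (w k y))"
    if "k \<in> {1..<n}" for k y
  proof -
    have g: "good (B (Suc k)) (u (Suc k)) (v (Suc k)) \<kappa>" using good that by auto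
    have PS: "P (Suc k) y = B (Suc k) *v P k y" unfolding P_def by (rule mprod_Suc_vec)
    have cS: "c (Suc k) y = v (Suc k) \<bullet> P k y" unfolding c_def PS by (rule decomp(1)[OF g]) (use k0 in simp)
    have "v (Suc k) \<bullet> P k y = (v (Suc k) \<bullet> u k) * c k y + v (Suc k) \<bullet> w k y"
      by (subst Pdec) (simp add: inner_add_right)
    moreover have "\<bar>v (Suc k) \<bullet> w k y\<bar> \<le> norm (w k y)"
      using Cauchy_Schwarz_ineq2[of "v (Suc k)" "w k y"] nu[of "Suc k"] that by simp
    ultimately have 1: "\<bar>c (Suc k) y - (v (Suc k) \<bullet> u k) * c k y\<bar> \<le> norm (w k y)" using cS by simp
    have "norm (w (Suc k) y) \<le> \<kappa> * norm (P k y)"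
      unfolding w_def cS PS using decomp(2)[OF g] k0 by simp
    also have "\<dots> \<le> \<kappa> * (\<bar>c k y\<bar> + norm (w k y))" using nyle[of k y] that k0 by (simp add: mult_left_mono)
    finally show ?thesis using 1 by simp
  qed
  have base: "\<bar>c 1 y\<bar> \<le> norm y \<and> norm (w 1 y) \<le> \<kappa> * norm y" for y
  proof -
    have g: "good (B 1) (u 1) (v 1) \<kappa>" using good n1 by auto
    have P1: "P 1 y = B 1 *v y" unfolding P_def by simp
    have c1: "c 1 y = v 1 \<bullet> y" unfolding c_def P1 by (rule decomp(1)[OF g]) (use k0 in simp)
    have "\<bar>c 1 y\<bar> \<le> norm y" using Cauchy_Schwarz_ineq2[of "v 1" y] nu[of 1] n1 c1 by simp
    moreover have "norm (w 1 y) \<le> \<kappa> * norm y" unfolding w_def c1 P1 using decomp(2)[OF g] k0 by simp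
    ultimately show ?thesis by simp
  qed
  have up: "\<bar>c (Suc j) x\<bar> \<le> (\<Prod>i\<in>{1..<Suc j}. a i + q) * norm x
        \<and> norm (w (Suc j) x) \<le> q * ((\<Prod>i\<in>{1..<Suc j}. a i + q) * norm x)" if "Suc j \<le> n" for j
    using that
  proof (induction j)
    case 0
    have "\<kappa> * norm x \<le> q * norm x" by (rule mult_right_mono[OF kq(1)]) simp
    thus ?case using base[of x] by simp
  next
    case (Suc j)
    define M where "M = (\<Prod>i\<in>{1..<Suc j}. a i + q) * norm x"
    have M0: "0 \<le> M" unfolding M_def using q0 by (intro mult_nonneg_nonneg prod_nonneg) (auto simp: a_def)
    have IH: "\<bar>c (Suc j) x\<bar> \<le> M" "norm (w (Suc j) x) \<le> q * M" using Suc unfolding M_def by auto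
    have jr: "Suc j \<in> {1..<n}" using Suc.prems by simp
    note st = step[OF jr, of x]
    have Mx: "(\<Prod>i\<in>{1..<Suc (Suc j)}. a i + q) * norm x = (a (Suc j) + q) * M"
      unfolding M_def by (simp add: prod.atLeastLessThan_Suc)
    have "\<bar>c (Suc (Suc j)) x\<bar> \<le> \<bar>(v (Suc (Suc j)) \<bullet> u (Suc j)) * c (Suc j) x\<bar>
        + \<bar>c (Suc (Suc j)) x - (v (Suc (Suc j)) \<bullet> u (Suc j)) * c (Suc j) x\<bar>"
      using abs_triangle_ineq2[of "c (Suc (Suc j)) x" "(v (Suc (Suc j)) \<bullet> u (Suc j)) * c (Suc j) x"] by linarith
    hence "\<bar>c (Suc (Suc j)) x\<bar> \<le> a (Suc j) * \<bar>c (Suc j) x\<bar> + norm (w (Suc j) x)"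
      using st unfolding a_def abs_mult by linarith
    also have "\<dots> \<le> a (Suc j) * M + q * M"
      using IH by (intro add_mono mult_left_mono) (auto simp: a_def)
    finally have c2: "\<bar>c (Suc (Suc j)) x\<bar> \<le> (a (Suc j) + q) * M" by (simp add: algebra_simps)
    have "norm (w (Suc (Suc j)) x) \<le> \<kappa> * (M + q * M)"
      using st IH k0 by (meson add_mono mult_left_mono less_imp_le order_trans)
    also have "\<dots> = (\<kappa> * (1 + q)) * M" by (simp add: algebra_simps)
    also have "\<dots> \<le> (q * (a (Suc j) + q)) * M" using sf(2)[OF jr] M0 by (rule mult_right_mono)
    finally have w2: "norm (w (Suc (Suc j)) x) \<le> q * ((a (Suc j) + q) * M)" by (simp add: mult.assoc)
    show ?case unfolding Mx using c2 w2 by blast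
  qed
  show "norm (mprod B 1 n *v x) \<le> (1 + 3*\<kappa>/\<epsilon>) * (\<Prod>i\<in>{1..<n}. \<bar>v (Suc i) \<bullet> u i\<bar> + 3*\<kappa>/\<epsilon>) * norm x"
  proof -
    obtain j where j: "n = Suc j" using n1 by (cases n) auto
    have "norm (mprod B 1 n *v x) \<le> \<bar>c n x\<bar> + norm (w n x)" using nyle[of n x] n1 unfolding P_def by simp
    also have "\<dots> \<le> (1 + q) * ((\<Prod>i\<in>{1..<n}. a i + q) * norm x)"
      using up[of j] j by (simp add: algebra_simps)
    finally show ?thesis unfolding q_def a_def by (simp add: mult.assoc)
  qed
  have lo: "(\<Prod>i\<in>{1..<Suc j}. a i - q) \<le> \<bar>c (Suc j) (v 1)\<bar>
        \<and> norm (w (Suc j) (v 1)) \<le> q * \<bar>c (Suc j) (v 1)\<bar>" if "Suc j \<le> n" for j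
    using that
  proof (induction j)
    case 0
    have g: "good (B 1) (u 1) (v 1) \<kappa>" using good n1 by auto
    have P1: "P 1 (v 1) = u 1" unfolding P_def using g unfolding good_def by simp
    have "c 1 (v 1) = 1" unfolding c_def P1 using nu[of 1] n1 by (simp add: norm_eq_1[symmetric])
    moreover have "w 1 (v 1) = 0" unfolding w_def using \<open>c 1 (v 1) = 1\<close> P1 by simp
    ultimately show ?case using q0 by simp
  next
    case (Suc j)
    define m where "m = (\<Prod>i\<in>{1..<Suc j}. a i - q)"
    have jr: "Suc j \<in> {1..<n}" using Suc.prems by simp
    have IH: "m \<le> \<bar>c (Suc j) (v 1)\<bar>" "norm (w (Suc j) (v 1)) \<le> q * \<bar>c (Suc j) (v 1)\<bar>"
      using Suc unfolding m_def by auto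
    note st = step[OF jr, of "v 1"]
    have mx: "(\<Prod>i\<in>{1..<Suc (Suc j)}. a i - q) = m * (a (Suc j) - q)"
      unfolding m_def by (simp add: prod.atLeastLessThan_Suc)
    have "\<bar>(v (Suc (Suc j)) \<bullet> u (Suc j)) * c (Suc j) (v 1)\<bar> \<le> \<bar>c (Suc (Suc j)) (v 1)\<bar>
        + \<bar>c (Suc (Suc j)) (v 1) - (v (Suc (Suc j)) \<bullet> u (Suc j)) * c (Suc j) (v 1)\<bar>"
      using abs_triangle_ineq2_sym[of "(v (Suc (Suc j)) \<bullet> u (Suc j)) * c (Suc j) (v 1)" "c (Suc (Suc j)) (v 1)"] by linarith
    hence "\<bar>c (Suc (Suc j)) (v 1)\<bar> \<ge> a (Suc j) * \<bar>c (Suc j) (v 1)\<bar> - norm (w (Suc j) (v 1))"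
      using st unfolding a_def abs_mult by linarith
    moreover have "a (Suc j) * \<bar>c (Suc j) (v 1)\<bar> - norm (w (Suc j) (v 1))
        \<ge> (a (Suc j) - q) * \<bar>c (Suc j) (v 1)\<bar>" using IH(2) by (simp add: algebra_simps)
    ultimately have c2: "\<bar>c (Suc (Suc j)) (v 1)\<bar> \<ge> (a (Suc j) - q) * \<bar>c (Suc j) (v 1)\<bar>" by linarith
    have "(a (Suc j) - q) * \<bar>c (Suc j) (v 1)\<bar> \<ge> (a (Suc j) - q) * m"
      using IH(1) sf(3)[OF jr] by (rule mult_left_mono)
    hence c3: "\<bar>c (Suc (Suc j)) (v 1)\<bar> \<ge> m * (a (Suc j) - q)" using c2 by (simp add: mult.commute)
    have "norm (w (Suc (Suc j)) (v 1)) \<le> \<kappa> * (\<bar>c (Suc j) (v 1)\<bar> + q * \<bar>c (Suc j) (v 1)\<bar>)"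
      using st IH k0 by (meson add_mono mult_left_mono less_imp_le order_trans order_refl)
    also have "\<dots> = (\<kappa> * (1 + q)) * \<bar>c (Suc j) (v 1)\<bar>" by (simp add: algebra_simps)
    also have "\<dots> \<le> (q * (a (Suc j) - q)) * \<bar>c (Suc j) (v 1)\<bar>" using sf(1)[OF jr] by (rule mult_right_mono) simp
    also have "\<dots> \<le> q * \<bar>c (Suc (Suc j)) (v 1)\<bar>" using c2 q0 by (simp add: mult.assoc mult_left_mono)
    finally have w2: "norm (w (Suc (Suc j)) (v 1)) \<le> q * \<bar>c (Suc (Suc j)) (v 1)\<bar>" .
    show ?case unfolding mx using c3 w2 by blast
  qed
  show "(\<Prod>i\<in>{1..<n}. \<bar>v (Suc i) \<bullet> u i\<bar> - 3*\<kappa>/\<epsilon>) \<le> norm (mprod B 1 n *v v 1)"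
  proof -
    obtain j where j: "n = Suc j" using n1 by (cases n) auto
    have "\<bar>c n (v 1)\<bar> \<le> norm (P n (v 1))"
      unfolding c_def using Cauchy_Schwarz_ineq2[of "u n" "P n (v 1)"] nu[of n] n1 by simp
    thus ?thesis using lo[of j] j unfolding P_def q_def a_def by simp
  qed
qed



lemma sv_data:
  fixes A :: "real^'d^'d"
  assumes d2: "2 \<le> CARD('d)"
  shows "\<exists>u v. norm u = 1 \<and> norm v = 1 \<and> A *v v = singval A 1 *\<^sub>R u \<and> 0 \<le> singval A 2 \<and>
     singval A 2 \<le> singval A 1 \<and>
     (\<forall>x. v \<bullet> x = 0 \<longrightarrow> norm (A *v x) \<le> singval A 2 * norm x \<and> u \<bullet> (A *v x) = 0)"
proof -
  obtain v u \<sigma> where inv: "svd_inv A CARD('d) v u \<sigma>"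
    and sv: "is_singular_values A (\<lambda>k. if k < CARD('d) then \<sigma> k else 0)"
    using svd_full[of A] by blast
  define s where "s = (\<lambda>k. if k < CARD('d) then \<sigma> k else 0)"
  have the: "(THE s. is_singular_values A s) = s"
  proof (rule the_equality)
    show "is_singular_values A s" using sv unfolding s_def .
    fix t assume "is_singular_values A t"
    thus "t = s" using sv_unique[of A t s] sv unfolding s_def by blast
  qed
  have s1: "singval A 1 = \<sigma> 0" unfolding singval_def the s_def using d2 by simp
  have s2: "singval A 2 = \<sigma> 1" unfolding singval_def the s_def using d2 by simp
  have p0: "norm (v 0) = 1" "norm (u 0) = 1" "A *v v 0 = \<sigma> 0 *\<^sub>R u 0" "0 \<le> \<sigma> 1"
    using inv d2 unfolding svd_inv_def by auto
  have p1: "\<sigma> 1 \<le> \<sigma> 0" using inv d2 unfolding svd_inv_def by auto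
  have p2: "norm (A *v x) \<le> \<sigma> 1 * norm x \<and> u 0 \<bullet> (A *v x) = 0" if "v 0 \<bullet> x = 0" for x
    using inv d2 that unfolding svd_inv_def by auto
  show ?thesis unfolding s1 s2 using p0 p1 p2 by blast
qed

lemma opnorm_ge: "norm (M *v x) \<le> opnorm M * norm x"
  unfolding opnorm_def by (rule onorm[OF matrix_vector_mul_bounded_linear])

lemma opnorm_le: "(\<And>x. norm (M *v x) \<le> b * norm x) \<Longrightarrow> opnorm (M::real^'d^'d) \<le> b"
  unfolding opnorm_def by (rule onorm_le)

lemma mat_data:
  fixes A :: "real^'d^'d"
  assumes d2: "2 \<le> CARD('d)" and k0: "0 < \<kappa>" and k1: "\<kappa> \<le> 1" and gap: "gap_ratio A \<ge> 1/\<kappa>"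
  shows "\<exists>u v. 0 < singval A 1 \<and> good ((1/singval A 1) *\<^sub>R A) u v \<kappa> \<and> opnorm A = singval A 1"
proof -
  obtain u v where d: "norm u = 1" "norm v = 1" "A *v v = singval A 1 *\<^sub>R u" "0 \<le> singval A 2"
     "singval A 2 \<le> singval A 1"
     "\<And>x. v \<bullet> x = 0 \<Longrightarrow> norm (A *v x) \<le> singval A 2 * norm x \<and> u \<bullet> (A *v x) = 0"
    using sv_data[OF d2, of A] by blast
  define N where "N = singval A 1"
  define s where "s = singval A 2"
  have g: "N / s \<ge> 1/\<kappa>" using gap unfolding gap_ratio_def N_def s_def .
  have s0: "0 < s"
  proof (rule ccontr)
    assume "\<not> 0 < s" hence "s = 0" using d(4) unfolding s_def by simp
    thus False using g k0 by simp
  qed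
  have N0: "0 < N" using s0 d(5) unfolding N_def s_def by simp
  have sk: "s \<le> \<kappa> * N" using g s0 k0 by (simp add: field_simps)
  define B where "B = (1/N) *\<^sub>R A"
  have Bx: "B *v x = (1/N) *\<^sub>R (A *v x)" for x unfolding B_def by (simp add: scaleR_matrix_vector_assoc)
  have gd: "good B u v \<kappa>" unfolding good_def
  proof (intro conjI allI impI)
    show "norm u = 1" "norm v = 1" using d by auto
    show "B *v v = u" unfolding Bx using d(3) N0 unfolding N_def by simp
  next
    fix x assume vx: "v \<bullet> x = 0"
    have "norm (B *v x) = norm (A *v x) / N" unfolding Bx using N0 by simp
    also have "\<dots> \<le> s * norm x / N" using d(6)[OF vx] N0 unfolding s_def by (simp add: divide_right_mono)
    also have "\<dots> \<le> \<kappa> * N * norm x / N"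
    proof -
      have "s * norm x \<le> \<kappa> * N * norm x" by (rule mult_right_mono[OF sk]) simp
      thus ?thesis using N0 by (rule divide_right_mono[OF _ less_imp_le])
    qed
    also have "\<dots> = \<kappa> * norm x" using N0 by simp
    finally show "norm (B *v x) \<le> \<kappa> * norm x" .
    show "u \<bullet> (B *v x) = 0" unfolding Bx using d(6)[OF vx] by simp
  qed
  have "opnorm A \<le> N"
  proof (rule opnorm_le)
    fix x
    have "norm (B *v x) \<le> norm x" using good_norm[OF gd] k0 k1 by simp
    thus "norm (A *v x) \<le> N * norm x" unfolding Bx using N0 by (simp add: field_simps)
  qed
  moreover have "N \<le> opnorm A" using opnorm_ge[of A v] d(1,2,3) N0 unfolding N_def by simp
  ultimately have "opnorm A = N" by simp
  thus ?thesis using gd N0 unfolding B_def N_def by blast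
qed



lemma exp_lower_aux:
  fixes X :: real assumes "0 \<le> X" "X \<le> 2/3"
  shows "exp (-3*X) \<le> 1 - X"
proof -
  have e: "1 + 3*X \<le> exp (3*X)" by (rule exp_ge_add_one_self)
  have h: "0 \<le> X * (2 - 3*X)" using assms by (intro mult_nonneg_nonneg) auto
  have "(1 - X) * (1 + 3*X) = 1 + X * (2 - 3*X)" by (simp add: algebra_simps)
  hence "1 \<le> (1 - X) * (1 + 3*X)" using h by linarith
  also have "\<dots> \<le> (1 - X) * exp (3*X)" using e assms by (intro mult_left_mono) auto
  finally have "1 \<le> (1 - X) * exp (3*X)" .
  hence "1 / exp (3*X) \<le> 1 - X" by (simp add: divide_le_eq)
  thus ?thesis by (simp add: exp_minus divide_inverse)
qed

lemma final_bounds: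
  fixes R \<kappa> \<epsilon> :: real and a \<rho> :: "nat \<Rightarrow> real" and n :: nat
  assumes k0: "0 < \<kappa>" and e0: "0 < \<epsilon>" and e1: "\<epsilon> \<le> 1/5" and ke: "\<kappa> \<le> \<epsilon>^2/6"
    and n1: "1 \<le> n"
    and rb: "\<forall>i\<in>{1..<n}. \<epsilon> \<le> \<rho> i \<and> \<rho> i \<le> a i + 2*\<kappa> \<and> a i - \<kappa> \<le> \<rho> i"
    and a0: "\<forall>i\<in>{1..<n}. 0 \<le> a i"
    and Rlo: "(\<Prod>i\<in>{1..<n}. a i - 3*\<kappa>/\<epsilon>) \<le> R"
    and Rup: "R \<le> (1 + 3*\<kappa>/\<epsilon>) * (\<Prod>i\<in>{1..<n}. a i + 3*\<kappa>/\<epsilon>)"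
  shows "exp (- 11 * n * \<kappa> / \<epsilon>^2) \<le> R / (\<Prod>i\<in>{1..<n}. \<rho> i)
       \<and> R / (\<Prod>i\<in>{1..<n}. \<rho> i) \<le> exp (11 * n * \<kappa> / \<epsilon>^2)"
proof -
  define q where "q = 3*\<kappa>/\<epsilon>"
  define D where "D = \<kappa>/\<epsilon>^2"
  have D0: "0 \<le> D" unfolding D_def using k0 by simp
  have D6: "D \<le> 1/6" unfolding D_def using ke e0 by (simp add: divide_le_eq)
  have qD: "q = 3 * \<epsilon> * D" unfolding q_def D_def using e0 by (simp add: power2_eq_square)
  have eD5: "\<epsilon> * D \<le> (1/5) * D" by (rule mult_right_mono) (use e1 D0 in auto)
  have eD: "\<epsilon> * D \<le> 1 * D" using eD5 D0 by simp
  have q3: "q \<le> 3 * D" unfolding qD using eD by simp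
  have q0: "0 \<le> q" using qD e0 D0 by simp
  have ke': "\<kappa> = \<epsilon>^2 * D" unfolding D_def using e0 by simp
  have k\<epsilon>: "\<kappa> / \<epsilon> = \<epsilon> * D" unfolding ke' using e0 by (simp add: power2_eq_square)
  have \<rho>0: "0 < \<rho> i" if "i \<in> {1..<n}" for i using rb that e0 by force
  have P0: "0 < (\<Prod>i\<in>{1..<n}. \<rho> i)" using \<rho>0 by (intro prod_pos) auto
  have card: "card {1..<n} = n - 1" by simp
  have flo: "exp (-11 * D) \<le> (a i - q) / \<rho> i" if i: "i \<in> {1..<n}" for i
  proof -
    define X where "X = (2*\<kappa> + q) / \<epsilon>"
    have X: "X = 2 * \<epsilon> * D + 3 * D" unfolding X_def qD using e0 k\<epsilon> by (simp add: add_divide_distrib)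
    have X0: "0 \<le> X" unfolding X using D0 e0 by simp
    have X34: "X \<le> 34/10 * D" unfolding X using eD5 by (simp add: mult.commute mult.left_commute)
    hence X23: "X \<le> 2/3" using D6 by simp
    have r: "\<epsilon> \<le> \<rho> i" "\<rho> i \<le> a i + 2*\<kappa>" using rb i by auto
    have "(2*\<kappa> + q) / \<rho> i \<le> (2*\<kappa> + q) / \<epsilon>"
      using r e0 k0 q0 by (intro divide_left_mono) auto
    hence "1 - X \<le> (\<rho> i - (2*\<kappa> + q)) / \<rho> i" using \<rho>0[OF i] unfolding X_def by (simp add: diff_divide_distrib)
    also have "\<dots> \<le> (a i - q) / \<rho> i" using r \<rho>0[OF i] by (intro divide_right_mono) auto
    finally have "1 - X \<le> (a i - q) / \<rho> i" .
    moreover have "exp (-11 * D) \<le> exp (-3 * X)" using X34 D0 by simp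
    ultimately show ?thesis using exp_lower_aux[OF X0 X23] by linarith
  qed
  have "exp (-11 * D) ^ (n - 1) \<le> (\<Prod>i\<in>{1..<n}. (a i - q) / \<rho> i)"
    using prod_mono[of "{1..<n}" "\<lambda>_. exp (-11 * D)" "\<lambda>i. (a i - q) / \<rho> i"] flo by simp
  also have "\<dots> = (\<Prod>i\<in>{1..<n}. a i - q) / (\<Prod>i\<in>{1..<n}. \<rho> i)" by (rule prod_dividef)
  also have "\<dots> \<le> R / (\<Prod>i\<in>{1..<n}. \<rho> i)" using Rlo P0 unfolding q_def by (intro divide_right_mono) auto
  finally have L1: "exp (-11 * D) ^ (n - 1) \<le> R / (\<Prod>i\<in>{1..<n}. \<rho> i)" .
  have "exp (- 11 * n * \<kappa> / \<epsilon>^2) = exp (real n * (-11 * D))" unfolding D_def by simp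
  also have "\<dots> \<le> exp (real (n - 1) * (-11 * D))" using D0 n1 by (simp add: of_nat_diff algebra_simps)
  also have "\<dots> = exp (-11 * D) ^ (n - 1)" by (rule exp_of_nat_mult)
  finally have lower: "exp (- 11 * n * \<kappa> / \<epsilon>^2) \<le> R / (\<Prod>i\<in>{1..<n}. \<rho> i)" using L1 by linarith
  have fup: "(a i + q) / \<rho> i \<le> exp (4 * D)" "0 \<le> (a i + q) / \<rho> i" if i: "i \<in> {1..<n}" for i
  proof -
    have r: "\<epsilon> \<le> \<rho> i" "a i - \<kappa> \<le> \<rho> i" using rb i by auto
    have "(\<kappa> + q) / \<rho> i \<le> (\<kappa> + q) / \<epsilon>"
      using r e0 k0 q0 by (intro divide_left_mono) auto
    also have "\<dots> = \<epsilon> * D + 3 * D" unfolding qD using e0 k\<epsilon> by (simp add: add_divide_distrib)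
    also have "\<dots> \<le> 4 * D" using eD by simp
    finally have h: "(\<kappa> + q) / \<rho> i \<le> 4 * D" .
    have "(a i + q) / \<rho> i \<le> (\<rho> i + \<kappa> + q) / \<rho> i" using r \<rho>0[OF i] by (intro divide_right_mono) auto
    also have "\<dots> = 1 + (\<kappa> + q) / \<rho> i" using \<rho>0[OF i] by (simp add: field_simps)
    also have "\<dots> \<le> 1 + 4 * D" using h by simp
    also have "\<dots> \<le> exp (4 * D)" by (rule exp_ge_add_one_self)
    finally show "(a i + q) / \<rho> i \<le> exp (4 * D)" .
    show "0 \<le> (a i + q) / \<rho> i" using a0 i q0 \<rho>0[OF i] by (intro divide_nonneg_pos) auto
  qed
  have "R / (\<Prod>i\<in>{1..<n}. \<rho> i) \<le> (1 + q) * (\<Prod>i\<in>{1..<n}. a i + q) / (\<Prod>i\<in>{1..<n}. \<rho> i)"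
    using Rup P0 unfolding q_def by (intro divide_right_mono) auto
  also have "\<dots> = (1 + q) * (\<Prod>i\<in>{1..<n}. (a i + q) / \<rho> i)" by (simp add: prod_dividef)
  also have "\<dots> \<le> exp (3 * D) * exp (4 * D) ^ (n - 1)"
  proof (rule mult_mono)
    show "1 + q \<le> exp (3 * D)" using q3 exp_ge_add_one_self[of "3*D"] by linarith
    show "(\<Prod>i\<in>{1..<n}. (a i + q) / \<rho> i) \<le> exp (4 * D) ^ (n - 1)"
      using prod_mono[of "{1..<n}" "\<lambda>i. (a i + q) / \<rho> i" "\<lambda>_. exp (4 * D)"] fup by simp
    show "0 \<le> exp (3 * D)" by simp
    show "0 \<le> (\<Prod>i\<in>{1..<n}. (a i + q) / \<rho> i)" using fup by (intro prod_nonneg) auto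
  qed
  also have "\<dots> = exp (3 * D + real (n - 1) * (4 * D))" by (simp add: exp_add exp_of_nat_mult)
  also have "\<dots> \<le> exp (11 * n * \<kappa> / \<epsilon>^2)"
  proof -
    have "3 * D + real (n - 1) * (4 * D) \<le> real n * (11 * D)" using D0 n1
      by (simp add: of_nat_diff algebra_simps)
    moreover have "11 * real n * \<kappa> / \<epsilon>^2 = real n * (11 * D)" unfolding D_def by simp
    ultimately show ?thesis by simp
  qed
  finally show ?thesis using lower by simp
qed



lemma pair_bounds:
  assumes g: "good B u v \<kappa>" and g': "good B' u' v' \<kappa>" and k0: "0 \<le> \<kappa>" and k1: "\<kappa> \<le> 1"
  shows "norm (B' *v (B *v x)) \<le> (\<bar>v' \<bullet> u\<bar> + 2*\<kappa>) * norm x"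
    and "\<bar>v' \<bullet> u\<bar> - \<kappa> \<le> norm (B' *v (B *v v))"
proof -
  have nu': "norm u' = 1" and nv': "norm v' = 1" and Bv: "B *v v = u" and nu: "norm u = 1"
    using g g' unfolding good_def by auto
  define y where "y = B *v x"
  have ny: "norm y \<le> norm x" unfolding y_def using good_norm[OF g k0 k1] .
  have r: "norm (y - (v \<bullet> x) *\<^sub>R u) \<le> \<kappa> * norm x" unfolding y_def using decomp(2)[OF g k0] .
  have "v' \<bullet> y = (v \<bullet> x) * (v' \<bullet> u) + v' \<bullet> (y - (v \<bullet> x) *\<^sub>R u)" by (simp add: inner_diff_right)
  moreover have "\<bar>v' \<bullet> (y - (v \<bullet> x) *\<^sub>R u)\<bar> \<le> \<kappa> * norm x"
    using Cauchy_Schwarz_ineq2[of v' "y - (v \<bullet> x) *\<^sub>R u"] nv' r by simp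
  moreover have "\<bar>(v \<bullet> x) * (v' \<bullet> u)\<bar> \<le> norm x * \<bar>v' \<bullet> u\<bar>"
    using Cauchy_Schwarz_ineq2[of v x] g unfolding good_def by (simp add: abs_mult mult_right_mono)
  ultimately have vy: "\<bar>v' \<bullet> y\<bar> \<le> norm x * \<bar>v' \<bullet> u\<bar> + \<kappa> * norm x" by linarith
  have "norm (B' *v y) \<le> norm ((v' \<bullet> y) *\<^sub>R u') + norm (B' *v y - (v' \<bullet> y) *\<^sub>R u')"
    by (rule norm_triangle_sub)
  also have "\<dots> \<le> \<bar>v' \<bullet> y\<bar> + \<kappa> * norm y" using decomp(2)[OF g' k0, of y] nu' by simp
  also have "\<dots> \<le> norm x * \<bar>v' \<bullet> u\<bar> + \<kappa> * norm x + \<kappa> * norm x"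
    using vy mult_left_mono[OF ny k0] by linarith
  finally show "norm (B' *v (B *v x)) \<le> (\<bar>v' \<bullet> u\<bar> + 2*\<kappa>) * norm x" unfolding y_def by (simp add: algebra_simps)
  have "norm ((v' \<bullet> u) *\<^sub>R u') \<le> norm (B' *v u) + norm (B' *v u - (v' \<bullet> u) *\<^sub>R u')"
    by (metis norm_triangle_sub add.commute norm_minus_commute)
  hence "\<bar>v' \<bullet> u\<bar> \<le> norm (B' *v u) + \<kappa>" using decomp(2)[OF g' k0, of u] nu nu' by simp
  thus "\<bar>v' \<bullet> u\<bar> - \<kappa> \<le> norm (B' *v (B *v v))" unfolding Bv by simp
qed

lemma mprod_scale:
  "mprod (\<lambda>i. c i *\<^sub>R L i) 1 k *v x = (\<Prod>i\<in>{1..k}. c i) *\<^sub>R (mprod L 1 k *v x)"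
proof (induction k arbitrary: x)
  case 0 thus ?case by simp
next
  case (Suc k)
  show ?case
    unfolding mprod_Suc_vec Suc.IH
    by (simp add: scaleR_matrix_vector_assoc[symmetric] matrix_vector_mult_scaleR mult.commute)
qed

lemma mprod_pair: "mprod L i (Suc i) = L (Suc i) ** L i"
  by (cases i) auto

theorem theorem2p4:
  fixes L :: "nat \<Rightarrow> real^'d^'d" and n :: nat and \<epsilon> \<kappa> :: real
  assumes "CARD('d) \<ge> 2" and "n \<ge> 36"
    and "0 < \<epsilon>" and "\<epsilon> \<le> 1/5"
    and "0 < \<kappa>" and "\<kappa> \<le> \<epsilon>^2 / 6"
    and "\<forall>i\<in>{1..n}. invertible (L i)"
    and "\<forall>i\<in>{1..n}. gap_ratio (L i) \<ge> 1 / \<kappa>"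
    and "\<forall>i\<in>{1..n-1}. rho L i (i+1) \<ge> \<epsilon>"
  shows "exp (- 11 * n * \<kappa> / \<epsilon>^2) \<le> rho L 1 n / (\<Prod>i=1..n-1. rho L i (i+1))
       \<and> rho L 1 n / (\<Prod>i=1..n-1. rho L i (i+1)) \<le> exp (11 * n * \<kappa> / \<epsilon>^2)"
proof -
  note d2 = assms(1) and e0 = assms(3) and e1 = assms(4) and k0 = assms(5) and ke = assms(6)
    and gap = assms(8) and rhoe = assms(9)
  have n1: "1 \<le> n" using assms(2) by simp
  have "\<epsilon>^2 \<le> (1/5)^2" using e0 e1 by (intro power_mono) auto
  hence "\<epsilon>^2 \<le> 1/25" by (simp add: power2_eq_square)
  hence k1: "\<kappa> \<le> 1" using ke by linarith
  have ex: "\<forall>i\<in>{1..n}. \<exists>p. 0 < singval (L i) 1 \<and> good ((1/singval (L i) 1) *\<^sub>R L i) (fst p) (snd p) \<kappa>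
      \<and> opnorm (L i) = singval (L i) 1"
  proof
    fix i assume "i \<in> {1..n}"
    then obtain u v where "0 < singval (L i) 1 \<and> good ((1/singval (L i) 1) *\<^sub>R L i) u v \<kappa>
      \<and> opnorm (L i) = singval (L i) 1" using mat_data[OF d2 k0 k1, of "L i"] gap by blast
    thus "\<exists>p. 0 < singval (L i) 1 \<and> good ((1/singval (L i) 1) *\<^sub>R L i) (fst p) (snd p) \<kappa>
      \<and> opnorm (L i) = singval (L i) 1" by (intro exI[of _ "(u, v)"]) simp
  qed
  then obtain f where f: "\<forall>i\<in>{1..n}. 0 < singval (L i) 1 \<and> good ((1/singval (L i) 1) *\<^sub>R L i) (fst (f i)) (snd (f i)) \<kappa>
      \<and> opnorm (L i) = singval (L i) 1" by (rule bchoice[elim_format]) blast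
  define N where "N i = singval (L i) 1" for i
  define B where "B i = (1 / N i) *\<^sub>R L i" for i
  define u where "u i = fst (f i)" for i
  define v where "v i = snd (f i)" for i
  have N0: "0 < N i" and gd: "good (B i) (u i) (v i) \<kappa>" and opn: "opnorm (L i) = N i"
    if "i \<in> {1..n}" for i using f that unfolding N_def B_def u_def v_def by auto
  define PN where "PN = (\<Prod>i\<in>{1..n}. N i)"
  have PN0: "0 < PN" unfolding PN_def using N0 by (intro prod_pos) auto
  have mB: "mprod B 1 n *v x = (1/PN) *\<^sub>R (mprod L 1 n *v x)" for x
  proof -
    have "mprod B 1 n *v x = (\<Prod>i\<in>{1..n}. 1 / N i) *\<^sub>R (mprod L 1 n *v x)"
      unfolding B_def by (rule mprod_scale)
    moreover have "(\<Prod>i\<in>{1..n}. 1 / N i) = 1 / PN" unfolding PN_def by (simp add: prod_dividef)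
    ultimately show ?thesis by simp
  qed
  have rho1n: "rho L 1 n = opnorm (mprod L 1 n) / PN"
  proof -
    have "(\<Prod>i=1..n. opnorm (L i)) = PN" unfolding PN_def using opn by (intro prod.cong) auto
    thus ?thesis unfolding rho_def by simp
  qed
  define a where "a i = \<bar>v (Suc i) \<bullet> u i\<bar>" for i
  define r where "r i = rho L i (Suc i)" for i
  have rb: "\<epsilon> \<le> r i \<and> r i \<le> a i + 2*\<kappa> \<and> a i - \<kappa> \<le> r i" if i: "i \<in> {1..<n}" for i
  proof -
    have i1: "i \<in> {1..n}" "Suc i \<in> {1..n}" using i by auto
    have r_eq: "r i = opnorm (L (Suc i) ** L i) / (N i * N (Suc i))"
      unfolding r_def rho_def mprod_pair using opn[OF i1(1)] opn[OF i1(2)] by simp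
    have NN: "0 < N i * N (Suc i)" using N0[OF i1(1)] N0[OF i1(2)] by simp
    have LL: "(L (Suc i) ** L i) *v x = (N i * N (Suc i)) *\<^sub>R (B (Suc i) *v (B i *v x))" for x
      unfolding B_def using N0[OF i1(1)] N0[OF i1(2)]
      by (simp add: scaleR_matrix_vector_assoc[symmetric] matrix_vector_mul_assoc[symmetric] matrix_vector_mult_scaleR)
    note pb = pair_bounds[OF gd[OF i1(1)] gd[OF i1(2)] _ k1]
    have "opnorm (L (Suc i) ** L i) \<le> (N i * N (Suc i)) * (a i + 2*\<kappa>)"
    proof (rule opnorm_le)
      fix x
      have "norm ((L (Suc i) ** L i) *v x) = (N i * N (Suc i)) * norm (B (Suc i) *v (B i *v x))"
        unfolding LL using NN by simp
      also have "\<dots> \<le> (N i * N (Suc i)) * ((a i + 2*\<kappa>) * norm x)"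
        using pb(1)[of x] k0 NN unfolding a_def by (intro mult_left_mono) auto
      finally show "norm ((L (Suc i) ** L i) *v x) \<le> (N i * N (Suc i)) * (a i + 2*\<kappa>) * norm x"
        by (simp add: mult.assoc)
    qed
    hence up: "r i \<le> a i + 2*\<kappa>" unfolding r_eq using NN by (simp add: divide_le_eq mult.commute)
    have "(N i * N (Suc i)) * (a i - \<kappa>) \<le> (N i * N (Suc i)) * norm (B (Suc i) *v (B i *v v i))"
      using pb(2) k0 NN unfolding a_def by (intro mult_left_mono) auto
    also have "\<dots> = norm ((L (Suc i) ** L i) *v v i)" unfolding LL using NN by simp
    also have "\<dots> \<le> opnorm (L (Suc i) ** L i) * norm (v i)" by (rule opnorm_ge)
    also have "\<dots> = opnorm (L (Suc i) ** L i)" using gd[OF i1(1)] unfolding good_def by simp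
    finally have lo: "a i - \<kappa> \<le> r i" unfolding r_eq using NN by (simp add: le_divide_eq mult.commute)
    have "\<epsilon> \<le> r i" using rhoe i unfolding r_def by auto
    thus ?thesis using up lo by simp
  qed
  have alow: "\<forall>i\<in>{1..<n}. 9/10*\<epsilon> \<le> \<bar>v (Suc i) \<bullet> u i\<bar>"
  proof
    fix i assume i: "i \<in> {1..<n}"
    have "\<epsilon>^2 \<le> \<epsilon> * (1/5)" using e0 e1 by (simp add: power2_eq_square)
    hence "2*\<kappa> \<le> \<epsilon>/10" using ke k0 by linarith
    thus "9/10*\<epsilon> \<le> \<bar>v (Suc i) \<bullet> u i\<bar>" using rb[OF i] unfolding a_def by linarith
  qed
  have gdall: "\<forall>i\<in>{1..n}. good (B i) (u i) (v i) \<kappa>" using gd by blast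
  note ch = chain[OF gdall k0 e0 e1 ke alow n1]
  define K where "K = (1 + 3*\<kappa>/\<epsilon>) * (\<Prod>i\<in>{1..<n}. \<bar>v (Suc i) \<bullet> u i\<bar> + 3*\<kappa>/\<epsilon>)"
  define m where "m = (\<Prod>i\<in>{1..<n}. \<bar>v (Suc i) \<bullet> u i\<bar> - 3*\<kappa>/\<epsilon>)"
  have "opnorm (mprod L 1 n) \<le> PN * K"
  proof (rule opnorm_le)
    fix x
    have "mprod L 1 n *v x = PN *\<^sub>R (mprod B 1 n *v x)" unfolding mB using PN0 by simp
    hence "norm (mprod L 1 n *v x) = PN * norm (mprod B 1 n *v x)" using PN0 by simp
    also have "\<dots> \<le> PN * (K * norm x)" using ch(1)[of x] PN0 unfolding K_def by (intro mult_left_mono) auto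
    finally show "norm (mprod L 1 n *v x) \<le> PN * K * norm x" by (simp add: mult.assoc)
  qed
  hence Rup: "rho L 1 n \<le> K" unfolding rho1n using PN0 by (simp add: divide_le_eq mult.commute)
  have "PN * m \<le> PN * norm (mprod B 1 n *v v 1)" using ch(2) PN0 unfolding m_def by (intro mult_left_mono) auto
  also have "\<dots> = norm (mprod L 1 n *v v 1)" unfolding mB using PN0 by simp
  also have "\<dots> \<le> opnorm (mprod L 1 n) * norm (v 1)" by (rule opnorm_ge)
  also have "\<dots> = opnorm (mprod L 1 n)" using gd[of 1] n1 unfolding good_def by simp
  finally have Rlo: "m \<le> rho L 1 n" unfolding rho1n using PN0 by (simp add: le_divide_eq mult.commute)
  have fb: "exp (- 11 * n * \<kappa> / \<epsilon>^2) \<le> rho L 1 n / (\<Prod>i\<in>{1..<n}. r i)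
       \<and> rho L 1 n / (\<Prod>i\<in>{1..<n}. r i) \<le> exp (11 * n * \<kappa> / \<epsilon>^2)"
  proof (rule final_bounds[OF k0 e0 e1 ke n1])
    show "\<forall>i\<in>{1..<n}. \<epsilon> \<le> r i \<and> r i \<le> a i + 2 * \<kappa> \<and> a i - \<kappa> \<le> r i" using rb by blast
    show "\<forall>i\<in>{1..<n}. 0 \<le> a i" unfolding a_def by simp
    show "(\<Prod>i\<in>{1..<n}. a i - 3 * \<kappa> / \<epsilon>) \<le> rho L 1 n" using Rlo unfolding m_def a_def .
    show "rho L 1 n \<le> (1 + 3 * \<kappa> / \<epsilon>) * (\<Prod>i\<in>{1..<n}. a i + 3 * \<kappa> / \<epsilon>)" using Rup unfolding K_def a_def .
  qed
  have "{1..n-1} = {1..<n}" using n1 by auto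
  hence "(\<Prod>i=1..n-1. rho L i (i+1)) = (\<Prod>i\<in>{1..<n}. r i)" unfolding r_def by simp
  thus ?thesis using fb by simp
qed

end
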